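(* Let $p>3$ be a prime and for $1\le k\le p-1$ define $$G(p,k)=\frac{p^2\binom{2p}{p}\binom{2p+2k}{p+k}\binom{2p-2k}{p-k}\binom{p+k}{p}}{2^{8p-2k-4}(2p+2k-1)\binom{2k}{k}}.$$ Then $$\sum_{k=1}^{(p-1)/2}G(p,k)\equiv -p^3E_{p-3}\pmod{p^4}.$$
   Context: $E_n$ denotes the $n$-th Euler number ($E_0=1$, $E_n=-\sum_{k=1}^{\lfloor n/2\rfloor}\binom{n}{2k}E_{n-2k}$ for $n\ge1$). Congruences between rationals modulo $p^m$ mean the difference is $p^m$ times a rational with denominator prime to $p$. *)

theory Defs
  imports Complex_Main "HOL-Computational_Algebra.Primes"
begin

function euler_num :: "nat \<Rightarrow> int" where
  "euler_num n = (if n = 0 then 1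
     else - (\<Sum>k\<in>{1..n div 2}. int (n choose (2*k)) * euler_num (n - 2*k)))"
  by auto
termination
  by (relation "measure id") auto

declare euler_num.simps [simp del]

definition rat_cong :: "rat \<Rightarrow> rat \<Rightarrow> nat \<Rightarrow> nat \<Rightarrow> bool" where
  "rat_cong x y p m \<longleftrightarrow>
     (\<exists>a b :: int. b \<noteq> 0 \<and> \<not> int p dvd b \<and> x - y = of_nat (p ^ m) * (of_int a / of_int b))"

definition G :: "nat \<Rightarrow> nat \<Rightarrow> rat" where
  "G p k = (of_nat (p^2 * ((2*p) choose p) * ((2*p + 2*k) choose (p + k))
               * ((2*p - 2*k) choose (p - k)) * ((p + k) choose p)))
           / (2 ^ (8*p - 2*k - 4) * of_nat (2*p + 2*k - 1) * of_nat ((2*k) choose k))"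

end

theory Submission
  imports Defs "HOL-Number_Theory.Number_Theory"
begin

definition pint :: "nat \<Rightarrow> rat \<Rightarrow> bool" where
  "pint p x \<longleftrightarrow> (\<exists>a b::int. b \<noteq> 0 \<and> \<not> int p dvd b \<and> x = of_int a / of_int b)"

lemma pint_frac: "\<not> int p dvd b \<Longrightarrow> pint p (of_int a / of_int b)"
  unfolding pint_def by (rule exI[of _ a], rule exI[of _ b]) auto

lemma pint_int: "prime p \<Longrightarrow> pint p (of_int a)"
  using pint_frac[of p 1 a] by (cases "p = 1") auto

lemma pint_nat: "prime p \<Longrightarrow> pint p (of_nat a)"
  using pint_int[of p "int a"] by simp

lemma pint_add:
  assumes "prime p" "pint p x" "pint p y" shows "pint p (x + y)"
proof -
  obtain a b where ab: "b \<noteq> 0" "\<not> int p dvd b" "x = of_int a / of_int b" using assms(2) pint_def by auto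
  obtain c d where cd: "d \<noteq> 0" "\<not> int p dvd d" "y = of_int c / of_int d" using assms(3) pint_def by auto
  have pr: "prime (int p)" using assms(1) by simp
  have "\<not> int p dvd b * d" using ab cd pr by (simp add: prime_dvd_mult_iff)
  moreover have "x + y = of_int (a*d + c*b) / of_int (b*d)" using ab cd by (simp add: field_simps)
  ultimately show ?thesis using pint_frac by metis
qed

lemma pint_mult:
  assumes "prime p" "pint p x" "pint p y" shows "pint p (x * y)"
proof -
  obtain a b where ab: "b \<noteq> 0" "\<not> int p dvd b" "x = of_int a / of_int b" using assms(2) pint_def by auto
  obtain c d where cd: "d \<noteq> 0" "\<not> int p dvd d" "y = of_int c / of_int d" using assms(3) pint_def by auto
  have pr: "prime (int p)" using assms(1) by simp
  have "\<not> int p dvd b * d" using ab cd pr by (simp add: prime_dvd_mult_iff)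
  moreover have "x * y = of_int (a*c) / of_int (b*d)" using ab cd by (simp add: field_simps)
  ultimately show ?thesis using pint_frac by metis
qed

lemma pint_neg: "pint p x \<Longrightarrow> pint p (- x)"
  unfolding pint_def by (metis minus_divide_left of_int_minus)

lemma pint_diff: "prime p \<Longrightarrow> pint p x \<Longrightarrow> pint p y \<Longrightarrow> pint p (x - y)"
  using pint_add[of p x "-y"] pint_neg by simp

lemma pint_sum: "prime p \<Longrightarrow> (\<And>i. i \<in> S \<Longrightarrow> pint p (f i)) \<Longrightarrow> pint p (\<Sum>i\<in>S. f i)"
proof (induction S rule: infinite_finite_induct)
  case (infinite A) then show ?case using pint_int[of p 0] by simp
next
  case empty then show ?case using pint_int[of p 0] by simp
next
  case (insert x F) then show ?case by (simp add: pint_add)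
qed

lemma rat_cong_iff: "rat_cong x y p m \<longleftrightarrow> (\<exists>z. pint p z \<and> x - y = of_nat (p^m) * z)"
  unfolding rat_cong_def pint_def by blast

lemma rat_cong_refl: "prime p \<Longrightarrow> rat_cong x x p m"
  unfolding rat_cong_iff using pint_int[of p 0] by (intro exI[of _ 0]) simp

lemma rat_cong_sym: "rat_cong x y p m \<Longrightarrow> rat_cong y x p m"
  unfolding rat_cong_iff by (metis minus_diff_eq mult_minus_right pint_neg)

lemma rat_cong_trans: "prime p \<Longrightarrow> rat_cong x y p m \<Longrightarrow> rat_cong y z p m \<Longrightarrow> rat_cong x z p m"
  unfolding rat_cong_iff
proof (elim exE conjE)
  fix u v assume "prime p" "pint p u" "x - y = of_nat (p ^ m) * u" "pint p v" "y - z = of_nat (p ^ m) * v"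
  then show "\<exists>w. pint p w \<and> x - z = of_nat (p ^ m) * w"
    by (intro exI[of _ "u+v"]) (auto simp: pint_add algebra_simps)
qed

lemma rat_cong_add: "prime p \<Longrightarrow> rat_cong x y p m \<Longrightarrow> rat_cong x' y' p m \<Longrightarrow> rat_cong (x+x') (y+y') p m"
  unfolding rat_cong_iff
proof (elim exE conjE)
  fix u v assume "prime p" "pint p u" "x - y = of_nat (p ^ m) * u" "pint p v" "x' - y' = of_nat (p ^ m) * v"
  then show "\<exists>w. pint p w \<and> x + x' - (y + y') = of_nat (p ^ m) * w"
    by (intro exI[of _ "u+v"]) (auto simp: pint_add algebra_simps)
qed

lemma rat_cong_neg: "rat_cong x y p m \<Longrightarrow> rat_cong (-x) (-y) p m"
  unfolding rat_cong_iff by (metis minus_diff_eq minus_diff_minus mult_minus_right pint_neg)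

lemma rat_cong_diff: "prime p \<Longrightarrow> rat_cong x y p m \<Longrightarrow> rat_cong x' y' p m \<Longrightarrow> rat_cong (x-x') (y-y') p m"
  using rat_cong_add[of p x y m "-x'" "-y'"] rat_cong_neg by simp

lemma rat_cong_mult: "prime p \<Longrightarrow> rat_cong x y p m \<Longrightarrow> rat_cong x' y' p m \<Longrightarrow> pint p x \<Longrightarrow> pint p y'
   \<Longrightarrow> rat_cong (x*x') (y*y') p m"
  unfolding rat_cong_iff
proof (elim exE conjE)
  fix u v assume *: "prime p" "pint p u" "x - y = of_nat (p ^ m) * u" "pint p v" "x' - y' = of_nat (p ^ m) * v"
    "pint p x" "pint p y'"
  have "x*x' - y*y' = x*(x'-y') + (x-y)*y'" by (simp add: algebra_simps)
  also have "\<dots> = of_nat (p^m) * (x*v + u*y')" using * by (simp add: algebra_simps)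
  finally show "\<exists>w. pint p w \<and> x*x' - y*y' = of_nat (p ^ m) * w"
    using * by (intro exI[of _ "x*v + u*y'"]) (auto simp: pint_add pint_mult)
qed

lemma rat_cong_cmult: "prime p \<Longrightarrow> pint p c \<Longrightarrow> rat_cong x y p m \<Longrightarrow> rat_cong (c*x) (c*y) p m"
  unfolding rat_cong_iff
proof (elim exE conjE)
  fix z assume "prime p" "pint p c" "pint p z" "x - y = of_nat (p ^ m) * z"
  then show "\<exists>w. pint p w \<and> c*x - c*y = of_nat (p ^ m) * w"
    by (intro exI[of _ "c*z"]) (auto simp: pint_mult algebra_simps)
qed

lemma rat_cong_sum: "prime p \<Longrightarrow> (\<And>i. i \<in> S \<Longrightarrow> rat_cong (f i) (g i) p m)
   \<Longrightarrow> rat_cong (\<Sum>i\<in>S. f i) (\<Sum>i\<in>S. g i) p m"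
proof (induction S rule: infinite_finite_induct)
  case (infinite A) then show ?case by (simp add: rat_cong_refl)
next
  case empty then show ?case by (simp add: rat_cong_refl)
next
  case (insert x F) then show ?case by (simp add: rat_cong_add)
qed

lemma rat_cong_int: "prime p \<Longrightarrow> [a = b] (mod int (p^m)) \<Longrightarrow> rat_cong (of_int a) (of_int b) p m"
proof -
  assume pp: "prime p" and "[a = b] (mod int (p^m))"
  then obtain c where "a - b = int (p^m) * c" by (meson cong_iff_dvd_diff dvdE)
  then have "of_int a - of_int b = (of_nat (p^m) :: rat) * of_int c"
    by (metis of_int_diff of_int_mult of_int_of_nat_eq)
  then show ?thesis unfolding rat_cong_iff using pint_int[OF pp] by blast
qed

lemma rat_cong_frac:
  assumes "prime p" "[X*Z = U*Y] (mod int p)" "\<not> int p dvd Y" "\<not> int p dvd Z"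
  shows "rat_cong (of_int X / of_int Y) (of_int U / of_int Z) p 1"
proof -
  obtain c where c: "X*Z - U*Y = int p * c" using assms(2) by (metis cong_iff_dvd_diff dvdE)
  have pr: "prime (int p)" using assms(1) by simp
  have nd: "\<not> int p dvd Y*Z" using assms pr by (simp add: prime_dvd_mult_iff)
  have Y0: "Y \<noteq> 0" "Z \<noteq> 0" using assms(3,4) by auto
  have "of_int X / of_int Y - of_int U / of_int Z = (of_int (X*Z - U*Y) / of_int (Y*Z) :: rat)"
    using Y0 by (simp add: field_simps)
  also have "\<dots> = of_nat p * (of_int c / of_int (Y*Z))" using c by simp
  finally have "of_int X / of_int Y - of_int U / of_int Z = of_nat (p^1) * (of_int c / of_int (Y*Z) :: rat)" by simp
  then show ?thesis unfolding rat_cong_iff using pint_frac[OF nd, of c] by blast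
qed

lemma rat_cong_scale3: "rat_cong x y p 1 \<Longrightarrow> rat_cong (of_nat (p^3) * x) (of_nat (p^3) * y) p 4"
  unfolding rat_cong_iff
proof (elim exE conjE)
  fix z assume "pint p z" "x - y = of_nat (p^1) * z"
  then show "\<exists>w. pint p w \<and> of_nat (p^3) * x - of_nat (p^3) * y = of_nat (p^4) * w"
    by (intro exI[of _ z]) (simp add: algebra_simps power_numeral_reduce)
qed

definition gE :: "nat \<Rightarrow> int \<Rightarrow> int" where
  "gE m y = (\<Sum>j\<le>m. int (m choose j) * euler_num j * y^(m-j))"

lemma E_rec: "s > 0 \<Longrightarrow> (\<Sum>k\<le>s div 2. int (s choose (2*k)) * euler_num (s-2*k)) = 0"
proof -
  assume s: "s > 0"
  have "(\<Sum>k\<le>s div 2. int (s choose (2*k)) * euler_num (s-2*k))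
     = euler_num s + (\<Sum>k\<in>{1..s div 2}. int (s choose (2*k)) * euler_num (s-2*k))"
    by (simp add: atMost_atLeast0 sum.atLeast_Suc_atMost)
  also have "euler_num s = - (\<Sum>k\<in>{1..s div 2}. int (s choose (2*k)) * euler_num (s-2*k))"
    using s by (subst euler_num.simps) simp
  finally show ?thesis by simp
qed

lemma even_sum: fixes s :: nat shows "(\<Sum>i\<le>s. if even i then f i else 0) = (\<Sum>k\<le>s div 2. f (2*k) :: int)"
proof (induction s)
  case 0 then show ?case by simp
next
  case (Suc s)
  show ?case
  proof (cases "even (Suc s)")
    case True
    then have "Suc s div 2 = Suc (s div 2)" by presburger
    moreover have "2 * Suc (s div 2) = Suc s" using True by presburger
    ultimately show ?thesis using Suc True by simp
  next
    case False
    then have "Suc s div 2 = s div 2" by presburger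
    then show ?thesis using Suc False by simp
  qed
qed

lemma E_even: "s > 0 \<Longrightarrow> (\<Sum>j\<le>s. int (s choose j) * euler_num j * (1 + (-1)^(s-j))) = 0"
proof -
  assume s: "s > 0"
  have "(\<Sum>j\<le>s. int (s choose j) * euler_num j * (1 + (-1)^(s-j)))
      = (\<Sum>i\<le>s. int (s choose (s-i)) * euler_num (s-i) * (1 + (-1)^(s-(s-i))))"
    by (rule sum.reindex_bij_witness[where i="\<lambda>i. s - i" and j="\<lambda>i. s - i"]) auto
  also have "\<dots> = (\<Sum>i\<le>s. if even i then 2 * (int (s choose i) * euler_num (s-i)) else 0)"
    by (rule sum.cong) (auto simp: binomial_symmetric[symmetric])
  also have "\<dots> = (\<Sum>k\<le>s div 2. 2 * (int (s choose (2*k)) * euler_num (s-2*k)))"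
    by (rule even_sum)
  also have "\<dots> = 0" using E_rec[OF s] by (simp add: sum_distrib_left[symmetric])
  finally show ?thesis .
qed

lemma E0: "euler_num 0 = 1" by (simp add: euler_num.simps)

lemma binom2: "(y+1)^r + (y-1)^r = (\<Sum>i\<le>r. int (r choose i) * (1 + (-1)^i) * (y::int)^(r-i))"
proof -
  have "(y+1)^r = (\<Sum>i\<le>r. int (r choose i) * 1^i * y^(r-i))"
    using binomial_ring[of "1::int" y r] by (simp add: add.commute)
  moreover have "(y-1)^r = (\<Sum>i\<le>r. int (r choose i) * (-1)^i * y^(r-i))"
    using binomial_ring[of "-1::int" y r] by (simp add: add.commute)
  ultimately show ?thesis by (simp add: sum.distrib[symmetric] algebra_simps)
qed

lemma gE_shift: "gE m (y+1) + gE m (y-1) = 2 * y^m"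
proof -
  define F where "F j i = int (m choose j) * euler_num j * (int ((m-j) choose i) * (1 + (-1)^i) * y^(m-j-i))" for j i
  have "gE m (y+1) + gE m (y-1) = (\<Sum>j\<le>m. int (m choose j) * euler_num j * ((y+1)^(m-j) + (y-1)^(m-j)))"
    unfolding gE_def by (simp add: sum.distrib[symmetric] algebra_simps)
  also have "\<dots> = (\<Sum>j\<le>m. \<Sum>i\<le>m-j. F j i)"
    unfolding F_def binom2 by (simp add: sum_distrib_left)
  also have "\<dots> = (\<Sum>(j,i)\<in>{(j,i). j+i \<le> m}. F j i)"
    by (auto simp: pairs_le_eq_Sigma sum.Sigma)
  also have "\<dots> = (\<Sum>s\<le>m. \<Sum>j\<le>s. F j (s-j))"
    by (rule sum.triangle_reindex_eq)
  also have "\<dots> = (\<Sum>s\<le>m. int (m choose s) * y^(m-s) * (\<Sum>j\<le>s. int (s choose j) * euler_num j * (1 + (-1)^(s-j))))"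
  proof (rule sum.cong[OF refl])
    fix s assume s: "s \<in> {..m}"
    have "F j (s-j) = int (m choose s) * y^(m-s) * (int (s choose j) * euler_num j * (1 + (-1)^(s-j)))"
      if j: "j \<in> {..s}" for j
    proof -
      have "(m choose s) * (s choose j) = (m choose j) * ((m-j) choose (s-j))"
        using choose_mult[of j s m] s j by simp
      then have "int (m choose j) * int ((m-j) choose (s-j)) = int (m choose s) * int (s choose j)"
        by (metis of_nat_mult)
      moreover have "m - j - (s - j) = m - s" using s j by simp
      ultimately show ?thesis unfolding F_def by (simp add: algebra_simps)
    qed
    then show "(\<Sum>j\<le>s. F j (s-j)) = int (m choose s) * y^(m-s) * (\<Sum>j\<le>s. int (s choose j) * euler_num j * (1 + (-1)^(s-j)))"
      by (simp add: sum_distrib_left)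
  qed
  also have "\<dots> = (\<Sum>s\<le>m. if s = 0 then 2 * y^m else 0)"
    by (rule sum.cong[OF refl]) (auto simp: E_even E0)
  also have "\<dots> = 2 * y^m" by simp
  finally show ?thesis .
qed

lemma tele: "(\<Sum>k<N. (-1)^k * (h k + h (Suc k))) = h 0 - (-1)^N * (h N :: int)"
  by (induction N) (auto simp: algebra_simps)

lemma gE_mod: assumes "d dvd y" shows "[gE m y = euler_num m] (mod d)"
proof -
  have "gE m y = (\<Sum>j<m. int (m choose j) * euler_num j * y^(m-j)) + euler_num m"
    unfolding gE_def lessThan_Suc_atMost[symmetric] by simp
  moreover have "d dvd (\<Sum>j<m. int (m choose j) * euler_num j * y^(m-j))"
  proof (rule dvd_sum)
    fix j assume "j \<in> {..<m}"
    then have "y dvd y^(m-j)" by (simp add: dvd_power)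
    then show "d dvd int (m choose j) * euler_num j * y^(m-j)" using assms
      by (meson dvd_mult dvd_trans)
  qed
  ultimately show ?thesis by (simp add: cong_iff_dvd_diff)
qed

lemma fold_sum: fixes n :: nat shows "(\<Sum>k<2*n+1. F k) = F n + (\<Sum>i\<in>{1..n}. F (n-i) + F (n+i) :: int)"
proof (induction n arbitrary: F)
  case 0 then show ?case by simp
next
  case (Suc n)
  have e: "2*Suc n+1 = Suc (Suc (2*n+1))" by simp
  have "(\<Sum>k<2*Suc n+1. F k) = (\<Sum>k<Suc (2*n+1). F k) + F (Suc (2*n+1))"
    by (simp only: e sum.lessThan_Suc)
  also have "(\<Sum>k<Suc (2*n+1). F k) = F 0 + (\<Sum>k<2*n+1. F (Suc k))"
    by (rule sum.lessThan_Suc_shift)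
  finally have "(\<Sum>k<2*Suc n+1. F k) = F 0 + (\<Sum>k<2*n+1. F (Suc k)) + F (Suc (2*n+1))" .
  also have "(\<Sum>k<2*n+1. F (Suc k)) = F (Suc n) + (\<Sum>i\<in>{1..n}. F (Suc (n-i)) + F (Suc (n+i)))"
    using Suc[of "\<lambda>k. F (Suc k)"] by simp
  also have "(\<Sum>i\<in>{1..n}. F (Suc (n-i)) + F (Suc (n+i))) = (\<Sum>i\<in>{1..n}. F (Suc n-i) + F (Suc n+i))"
    by (rule sum.cong) (auto simp: Suc_diff_le)
  finally have A: "(\<Sum>k<2*Suc n+1. F k) = F 0 + (F (Suc n) + (\<Sum>i\<in>{1..n}. F (Suc n-i) + F (Suc n+i))) + F (Suc (2*n+1))" .
  have B: "(\<Sum>i\<in>{1..Suc n}. F (Suc n-i) + F (Suc n+i)) = (\<Sum>i\<in>{1..n}. F (Suc n-i) + F (Suc n+i)) + (F 0 + F (Suc (2*n+1)))"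
    by (simp add: sum.cl_ivl_Suc mult_2)
  show ?case unfolding A B by (simp add: algebra_simps)
qed

lemma E_cong_int:
  assumes p: "prime p" "p > 3"
  defines "n \<equiv> (p - 1) div 2"
  shows "[euler_num (p-3) = 2^(p-2) * (-1)^n * (\<Sum>i\<in>{1..n}. (-1)^i * int i ^ (p-3))] (mod int p)"
proof -
  define m where "m = p - 3"
  have odd: "odd p" using p prime_odd_nat by auto
  then have pn: "p = 2*n+1" unfolding n_def by presburger
  have m0: "m > 0" "even m" using p odd unfolding m_def by auto
  define h where "h k = gE m (2 * int k - int p)" for k
  have "(\<Sum>k<p. (-1)^k * (h k + h (Suc k))) = h 0 - (-1)^p * h p" by (rule tele)
  also have "\<dots> = gE m (- int p) + gE m (int p)" unfolding h_def using odd by simp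
  finally have eq1: "(\<Sum>k<p. (-1)^k * (h k + h (Suc k))) = gE m (- int p) + gE m (int p)" .
  have "h k + h (Suc k) = 2 * (2 * int k + 1 - int p)^m" for k
  proof -
    have "h k + h (Suc k) = gE m ((2 * int k + 1 - int p) - 1) + gE m ((2 * int k + 1 - int p) + 1)"
      unfolding h_def by (simp add: algebra_simps)
    then show ?thesis using gE_shift[of m "2 * int k + 1 - int p"] by (simp add: add.commute)
  qed
  with eq1 have eq2: "(\<Sum>k<p. (-1)^k * (2 * (2 * int k + 1 - int p)^m)) = gE m (- int p) + gE m (int p)"
    by simp
  have cg: "[gE m (- int p) + gE m (int p) = euler_num m + euler_num m] (mod int p)"
    by (intro cong_add gE_mod) auto
  have "(\<Sum>k<p. (-1)^k * (2 * (2 * int k + 1 - int p)^m)) = 2 * (\<Sum>k<p. (-1)^k * (2 * int k + 1 - int p)^m)"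
    by (simp add: sum_distrib_left mult.left_commute)
  with eq2 have e3: "2 * (\<Sum>k<p. (-1)^k * (2 * int k + 1 - int p)^m) = gE m (- int p) + gE m (int p)" by simp
  have "[2 * (\<Sum>k<p. (-1)^k * (2 * int k + 1 - int p)^m) = 2 * euler_num m] (mod int p)"
    using cg by (simp only: e3 mult_2[of "euler_num m"])
  moreover have "coprime (2::int) (int p)"
    using odd by (simp add: coprime_commute)
  ultimately have c1: "[(\<Sum>k<p. (-1)^k * (2 * int k + 1 - int p)^m) = euler_num m] (mod int p)"
    using cong_mult_lcancel by blast
  define F where "F k = (-1)^k * (2 * int k + 1 - int p)^m" for k
  have "(\<Sum>k<p. F k) = F n + (\<Sum>i\<in>{1..n}. F (n-i) + F (n+i))"
    using fold_sum[where n=n and F=F] pn by simp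
  also have "F n = 0" unfolding F_def using pn m0 by simp
  also have "(\<Sum>i\<in>{1..n}. F (n-i) + F (n+i)) = (\<Sum>i\<in>{1..n}. 2^(m+1) * (-1)^n * ((-1)^i * int i ^ m))"
  proof (rule sum.cong[OF refl])
    fix i assume i: "i \<in> {1..n}"
    have a: "2 * int (n-i) + 1 - int p = - (2 * int i)" using i pn by auto
    have b: "2 * int (n+i) + 1 - int p = 2 * int i" using pn by auto
    have c: "(-1::int)^(n-i) = (-1)^n * (-1)^i"
    proof -
      have "n = (n-i) + i" using i by simp
      then have "(-1::int)^n = (-1)^(n-i) * (-1)^i" by (metis power_add)
      then have "(-1::int)^n * (-1)^i = (-1)^(n-i) * ((-1)^i * (-1)^i)" by (simp add: algebra_simps)
      also have "(-1::int)^i * (-1)^i = 1" by (simp add: power_add[symmetric])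
      finally show ?thesis by simp
    qed
    show "F (n-i) + F (n+i) = 2^(m+1) * (-1)^n * ((-1)^i * int i ^ m)"
      unfolding F_def a b c using m0 by (simp add: power_add power_mult_distrib algebra_simps)
  qed
  finally have fs: "(\<Sum>k<p. F k) = 2^(m+1) * (-1)^n * (\<Sum>i\<in>{1..n}. (-1)^i * int i ^ m)"
    by (simp add: sum_distrib_left)
  have m1: "m + 1 = p - 2" unfolding m_def using p by simp
  from c1 have "[(\<Sum>k<p. F k) = euler_num m] (mod int p)" unfolding F_def .
  then have "[2^(p-2) * (-1)^n * (\<Sum>i\<in>{1..n}. (-1)^i * int i ^ m) = euler_num m] (mod int p)"
    unfolding fs m1 .
  then show ?thesis unfolding m_def by (rule cong_sym)
qed

lemma perm2:
  assumes p: "prime p" "p > 2"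
  shows "(\<Sum>i\<in>{1..p-1}. ((2*i) mod p)^m) = (\<Sum>i\<in>{1..p-1}. (i::nat)^m)"
proof -
  have cop: "coprime 2 p" using p by (metis odd_imp_coprime_nat coprime_commute prime_odd_nat)
  have sub: "(\<lambda>i. (2*i) mod p) ` {1..p-1} \<subseteq> {1..p-1}"
  proof
    fix x assume "x \<in> (\<lambda>i. (2*i) mod p) ` {1..p-1}"
    then obtain i where i: "i \<in> {1..p-1}" "x = (2*i) mod p" by auto
    have "\<not> p dvd 2*i"
    proof
      assume "p dvd 2*i"
      then have "p dvd i" using cop p by (metis coprime_commute coprime_dvd_mult_right_iff)
      then show False using i by (auto dest: dvd_imp_le)
    qed
    then have "x \<noteq> 0" using i by (auto simp: dvd_eq_mod_eq_0)
    moreover have "x < p" using i p by auto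
    ultimately show "x \<in> {1..p-1}" by auto
  qed
  have inj: "inj_on (\<lambda>i. (2*i) mod p) {1..p-1}"
  proof
    fix i j assume i: "i \<in> {1..p-1}" and j: "j \<in> {1..p-1}" and e: "(2*i) mod p = (2*j) mod p"
    then have "[2*i = 2*j] (mod p)" by (simp add: cong_def)
    then have "[i = j] (mod p)" using cop by (simp add: cong_mult_lcancel_nat)
    moreover have "i < p" "j < p" using i j p by auto
    ultimately show "i = j" by (simp add: cong_def)
  qed
  have img: "(\<lambda>i. (2*i) mod p) ` {1..p-1} = {1..p-1}"
    using endo_inj_surj[OF _ sub inj] by simp
  have "bij_betw (\<lambda>i. (2*i) mod p) {1..p-1} {1..p-1}"
    using inj img by (simp add: bij_betw_def)
  then show ?thesis by (rule sum.reindex_bij_betw)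
qed

lemma powsum_full:
  assumes p: "prime p" "p > 3"
  shows "int p dvd (\<Sum>i\<in>{1..p-1}. int i ^ (p-3))"
proof -
  define m where "m = p - 3"
  define T where "T = (\<Sum>i\<in>{1..p-1}. (i::nat)^m)"
  have "[(\<Sum>i\<in>{1..p-1}. ((2*i) mod p)^m) = (\<Sum>i\<in>{1..p-1}. (2*i)^m)] (mod p)"
    by (intro cong_sum cong_pow) (simp add: cong_def)
  moreover have P: "(\<Sum>i\<in>{1..p-1}. ((2*i) mod p)^m) = (\<Sum>i\<in>{1..p-1}. (i::nat)^m)"
    using perm2 p by simp
  ultimately have "[T = 2^m * T] (mod p)"
    unfolding T_def by (simp add: power_mult_distrib sum_distrib_left)
  then have cT: "[int T = 2^m * int T] (mod int p)"
    by (metis cong_int_iff of_nat_mult of_nat_numeral of_nat_power)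
  then have d1: "int p dvd (2^m - 1) * int T"
  proof -
    from cT have "int p dvd int T - 2^m * int T" by (simp add: cong_iff_dvd_diff)
    then have "int p dvd - (int T - 2^m * int T)" by (simp only: dvd_minus_iff)
    then show ?thesis by (simp add: algebra_simps)
  qed
  have pr: "prime (int p)" using p by simp
  have "\<not> int p dvd (2^m - 1)"
  proof
    assume a: "int p dvd (2^m - 1)"
    have "\<not> p dvd 2" using p by (auto dest: dvd_imp_le)
    then have "[2^(p-1) = 1] (mod p)" using fermat_theorem[OF p(1), of 2] by simp
    then have "int p dvd 2^(p-1) - 1"
      by (metis cong_iff_dvd_diff cong_int_iff of_nat_1 of_nat_numeral of_nat_power)
    moreover have "(2::int)^(p-1) = 4 * 2^m"
    proof -
      have "p - 1 = m + 2" unfolding m_def using p by simp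
      then show ?thesis by (simp add: power_add)
    qed
    ultimately have "int p dvd 4 * 2^m - 1" by simp
    moreover have "int p dvd 4 * (2^m - 1)" using a by (rule dvd_mult)
    ultimately have "int p dvd (4 * 2^m - 1) - 4 * (2^m - 1)" by (rule dvd_diff)
    then have "int p dvd 3" by (simp add: algebra_simps)
    then have "int p dvd int 3" by simp
    then have "p dvd 3" by (simp only: int_dvd_int_iff)
    then show False using p by (auto dest: dvd_imp_le)
  qed
  with d1 pr have "int p dvd int T" by (simp add: prime_dvd_mult_iff)
  then show ?thesis unfolding T_def m_def by simp
qed

lemma powsum_half:
  assumes p: "prime p" "p > 3"
  shows "int p dvd (\<Sum>i\<in>{1..(p-1) div 2}. int i ^ (p-3))"
proof -
  define n where "n = (p-1) div 2"
  define m where "m = p - 3"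
  have odd: "odd p" using p prime_odd_nat by auto
  then have pn: "p = 2*n+1" unfolding n_def by presburger
  have ev: "even m" using odd p unfolding m_def by auto
  have "{1..p-1} = {1..n} \<union> {n+1..2*n}" using pn by auto
  then have "(\<Sum>i\<in>{1..p-1}. int i ^ m) = (\<Sum>i\<in>{1..n}. int i ^ m) + (\<Sum>i\<in>{n+1..2*n}. int i ^ m)"
    by (simp add: sum.union_disjoint ivl_disj_int_two)
  also have "(\<Sum>i\<in>{n+1..2*n}. int i ^ m) = (\<Sum>i\<in>{1..n}. int (p-i) ^ m)"
    by (rule sum.reindex_bij_witness[where i="\<lambda>i. p - i" and j="\<lambda>i. p - i"]) (use pn in auto)
  finally have eq: "(\<Sum>i\<in>{1..p-1}. int i ^ m) = (\<Sum>i\<in>{1..n}. int i ^ m) + (\<Sum>i\<in>{1..n}. int (p-i) ^ m)" .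
  have "[(\<Sum>i\<in>{1..n}. int (p-i) ^ m) = (\<Sum>i\<in>{1..n}. (- int i) ^ m)] (mod int p)"
  proof (intro cong_sum cong_pow)
    fix i assume "i \<in> {1..n}"
    then have "int (p-i) = int p + (- int i)" using pn by auto
    then show "[int (p-i) = - int i] (mod int p)" by (simp add: cong_iff_dvd_diff)
  qed
  also have "(\<Sum>i\<in>{1..n}. (- int i) ^ m) = (\<Sum>i\<in>{1..n}. int i ^ m)"
    by (rule sum.cong[OF refl]) (rule Parity.power_minus_even[OF ev])
  finally have A: "[(\<Sum>i\<in>{1..p-1}. int i ^ m) = 2 * (\<Sum>i\<in>{1..n}. int i ^ m)] (mod int p)"
    unfolding eq mult_2 by (rule cong_add_lcancel[THEN iffD2])
  have B: "[(\<Sum>i\<in>{1..p-1}. int i ^ m) = 0] (mod int p)"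
    using powsum_full[OF p] unfolding m_def by (simp only: cong_0_iff)
  have "[2 * (\<Sum>i\<in>{1..n}. int i ^ m) = 0] (mod int p)" using cong_trans[OF cong_sym[OF A] B] .
  then have "int p dvd 2 * (\<Sum>i\<in>{1..n}. int i ^ m)" by (simp only: cong_0_iff)
  moreover have "\<not> int p dvd 2"
  proof
    assume "int p dvd 2"
    then have "int p dvd int 2" by simp
    then have "p dvd 2" by (simp only: int_dvd_int_iff)
    then show False using p by (auto dest: dvd_imp_le)
  qed
  moreover have pr: "prime (int p)" using p by simp
  ultimately have "int p dvd (\<Sum>i\<in>{1..n}. int i ^ m)" by (simp add: prime_dvd_mult_iff)
  then show ?thesis unfolding n_def m_def .
qed

lemma recip_abs: "(B::rat) \<noteq> 0 \<Longrightarrow> A \<noteq> 0 \<Longrightarrow> M \<noteq> 0 \<Longrightarrow> (M - I) * B = M * A \<Longrightarrow> 1 / B = 1 / A - I / (M * A)"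
proof -
  assume *: "B \<noteq> 0" "A \<noteq> 0" "M \<noteq> 0" "(M - I) * B = M * A"
  then have "1 / B = (M - I) / (M * A)" by (simp add: field_simps)
  also have "\<dots> = 1 / A - I / (M * A)" using * by (simp add: field_simps)
  finally show ?thesis .
qed

lemma recip_step: "i \<le> m \<Longrightarrow> 1 / (of_nat (Suc m choose i) :: rat) = 1 / of_nat (m choose i) - of_nat i / (of_nat (Suc m) * of_nat (m choose i))"
proof -
  assume i: "i \<le> m"
  have "(Suc m - i) * (Suc m choose i) = Suc m * (m choose i)"
    using binomial_absorb_comp[of "Suc m" i] by simp
  then have e: "(of_nat (Suc m - i) :: rat) * of_nat (Suc m choose i) = of_nat (Suc m) * of_nat (m choose i)"
    by (metis of_nat_mult)
  have nz: "(of_nat (m choose i) :: rat) \<noteq> 0" "(of_nat (Suc m choose i) :: rat) \<noteq> 0" using i by auto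
  have si: "(of_nat (Suc m - i) :: rat) = of_nat (Suc m) - of_nat i" using i by (simp add: of_nat_diff)
  show ?thesis
    by (rule recip_abs[OF nz(2) nz(1)]) (use e si in \<open>simp_all del: of_nat_Suc\<close>)
qed

lemma split_step:
  "(\<Sum>i\<in>{1..Suc m}. (-1)^i * F i / (of_nat (Suc m choose i) :: rat))
   = (\<Sum>i\<in>{1..m}. (-1)^i * F i / of_nat (m choose i))
     - (1 / of_nat (Suc m)) * (\<Sum>i\<in>{1..m}. (-1)^i * (of_nat i * F i) / of_nat (m choose i))
     + (-1)^(Suc m) * F (Suc m)"
proof -
  have "(\<Sum>i\<in>{1..Suc m}. (-1)^i * F i / (of_nat (Suc m choose i) :: rat))
      = (\<Sum>i\<in>{1..m}. (-1)^i * F i / (of_nat (Suc m choose i) :: rat)) + (-1)^(Suc m) * F (Suc m)"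
    by (simp add: sum.cl_ivl_Suc)
  also have "(\<Sum>i\<in>{1..m}. (-1)^i * F i / (of_nat (Suc m choose i) :: rat))
     = (\<Sum>i\<in>{1..m}. (-1)^i * F i / of_nat (m choose i) - (1 / of_nat (Suc m)) * ((-1)^i * (of_nat i * F i) / of_nat (m choose i)))"
  proof (rule sum.cong[OF refl])
    fix i assume "i \<in> {1..m}"
    then have "1 / (of_nat (Suc m choose i) :: rat) = 1 / of_nat (m choose i) - of_nat i / (of_nat (Suc m) * of_nat (m choose i))"
      by (intro recip_step) auto
    then have "(-1)^i * F i / (of_nat (Suc m choose i) :: rat) = (-1)^i * F i * (1 / of_nat (m choose i) - of_nat i / (of_nat (Suc m) * of_nat (m choose i)))"
      by (metis times_divide_eq_right mult_1_right)
    then show "(-1)^i * F i / (of_nat (Suc m choose i) :: rat) = (-1)^i * F i / of_nat (m choose i) - (1 / of_nat (Suc m)) * ((-1)^i * (of_nat i * F i) / of_nat (m choose i))"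
      by (simp add: algebra_simps)
  qed
  also have "\<dots> = (\<Sum>i\<in>{1..m}. (-1)^i * F i / of_nat (m choose i)) - (1 / of_nat (Suc m)) * (\<Sum>i\<in>{1..m}. (-1)^i * (of_nat i * F i) / of_nat (m choose i))"
    by (simp add: sum_subtractf sum_distrib_left)
  finally show ?thesis .
qed

lemma X: "(M::rat) \<noteq> 0 \<Longrightarrow> N \<noteq> 0 \<Longrightarrow> N = M + 1 \<Longrightarrow> -(1-s)/M - 1/M*((1+s)*M/N - 1) + (-s)*(1/M) = -(1-(-s))/N"
proof -
  assume a: "M \<noteq> 0" "N \<noteq> 0" "N = M + 1"
  have "-(1-s)/M - 1/M*((1+s)*M/N - 1) + (-s)*(1/M) - (-(1-(-s))/N) = ((-(1-s)*N - ((1+s)*M - N) - s*N) + (1+s)*M) / (M*N)"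
    using a(1,2) by (simp add: field_simps)
  also have "(-(1-s)*N - ((1+s)*M - N) - s*N) + (1+s)*M = 0" by (simp add: algebra_simps)
  finally show ?thesis by simp
qed
lemma Y: "(M::rat) \<noteq> 0 \<Longrightarrow> R - (1/M)*(-(1-s)/M) + (-s)*(1/M^2) = R + (2*(-s)+1)/M^2"
  by (simp add: field_simps power2_eq_square)

lemma Z: "(A::rat) \<noteq> 0 \<Longrightarrow> K \<noteq> 0 \<Longrightarrow> K + 1 \<noteq> 0 \<Longrightarrow> s / A = K/(K+1) * (s * ((K+1)/(K*A)))"
proof -
  assume a: "A \<noteq> 0" "K \<noteq> 0" "K + 1 \<noteq> 0"
  have "K/(K+1) * (s * ((K+1)/(K*A))) = s * ((K * (K+1)) / ((K+1) * (K * A)))" by (simp add: mult_ac)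
  also have "(K * (K+1)) / ((K+1) * (K * A)) = 1 / A" using a by simp
  finally show ?thesis by simp
qed

lemma h_closed: "(\<Sum>i\<le>k. (-1)^i / (of_nat (k choose i) :: rat)) = (1 + (-1)^k) * of_nat (k+1) / of_nat (k+2)"
proof -
  define q where "q i = (-1)^i / (of_nat (Suc k choose i) :: rat)" for i
  have t: "(-1)^i / (of_nat (k choose i) :: rat) = of_nat (k+1) / of_nat (k+2) * (q i - q (Suc i))" if i: "i \<le> k" for i
  proof -
    have a: "(Suc k - i) * (Suc k choose i) = Suc k * (k choose i)"
      using binomial_absorb_comp[of "Suc k" i] by simp
    have b: "Suc i * (Suc k choose Suc i) = Suc k * (k choose i)"
      using binomial_absorption[of i "Suc k"] by simp
    have a': "(of_nat (Suc k) - of_nat i) * (of_nat (Suc k choose i) :: rat) = of_nat (Suc k) * of_nat (k choose i)"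
      using a i by (metis of_nat_diff of_nat_mult le_SucI)
    have b': "(of_nat i + 1) * (of_nat (Suc k choose Suc i) :: rat) = of_nat (Suc k) * of_nat (k choose i)"
      using b by (metis of_nat_Suc of_nat_mult add.commute)
    have nz: "(of_nat (k choose i) :: rat) \<noteq> 0" "(of_nat (Suc k choose i) :: rat) \<noteq> 0" "(of_nat (Suc k choose Suc i) :: rat) \<noteq> 0"
      using i by (simp_all del: binomial_Suc_Suc)
    have inv: "\<And>B X Y :: rat. B \<noteq> 0 \<Longrightarrow> Y \<noteq> 0 \<Longrightarrow> X * B = Y \<Longrightarrow> 1 / B = X / Y"
      by (simp add: field_simps)
    have Y0: "(of_nat (Suc k) * of_nat (k choose i) :: rat) \<noteq> 0" using nz(1) by (simp del: of_nat_Suc)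
    have c1: "1 / (of_nat (Suc k choose i) :: rat) = (of_nat (Suc k) - of_nat i) / (of_nat (Suc k) * of_nat (k choose i))"
      by (rule inv[OF nz(2) Y0 a'])
    have c2: "1 / (of_nat (Suc k choose Suc i) :: rat) = (of_nat i + 1) / (of_nat (Suc k) * of_nat (k choose i))"
      by (rule inv[OF nz(3) Y0 b'])
    have "q i - q (Suc i) = (-1)^i * (1 / of_nat (Suc k choose i) + 1 / of_nat (Suc k choose Suc i))"
      unfolding q_def by (simp add: field_simps del: binomial_Suc_Suc)
    also have "\<dots> = (-1)^i * (((of_nat (Suc k) - of_nat i) + (of_nat i + 1)) / (of_nat (Suc k) * of_nat (k choose i)))"
      unfolding c1 c2 by (simp only: add_divide_distrib)
    also have "((of_nat (Suc k) - of_nat i) + (of_nat i + 1)) / (of_nat (Suc k) * of_nat (k choose i))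
       = ((of_nat (Suc k) + 1) / (of_nat (Suc k) * of_nat (k choose i)) :: rat)"
      by (rule arg_cong[where f="\<lambda>x. x / _"]) simp
    finally have qq: "q i - q (Suc i) = (-1)^i * ((of_nat (Suc k) + 1) / (of_nat (Suc k) * of_nat (k choose i)))" .
    define K where "K = (of_nat (Suc k) :: rat)"
    have K0: "K \<noteq> 0" "K + 1 \<noteq> 0" unfolding K_def by (simp, linarith)
    have "(of_nat (k+1) :: rat) / of_nat (k+2) = K / (K + 1)" unfolding K_def by simp
    moreover have "(-1)^i / (of_nat (k choose i) :: rat) = K/(K+1) * ((-1)^i * ((K+1)/(K*of_nat (k choose i))))"
      by (rule Z[OF nz(1) K0])
    ultimately show ?thesis unfolding qq K_def by simp
  qed
  have "(\<Sum>i\<le>k. (-1)^i / (of_nat (k choose i) :: rat)) = (\<Sum>i<Suc k. of_nat (k+1) / of_nat (k+2) * (q i - q (Suc i)))"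
    unfolding lessThan_Suc_atMost by (rule sum.cong) (auto simp: t)
  also have "\<dots> = of_nat (k+1) / of_nat (k+2) * (\<Sum>i<Suc k. q i - q (Suc i))"
    by (rule sum_distrib_left[symmetric])
  also have "\<dots> = of_nat (k+1) / of_nat (k+2) * (q 0 - q (Suc k))"
    by (simp only: sum_lessThan_telescope')
  also have "q 0 - q (Suc k) = 1 + (-1)^k" unfolding q_def by simp
  finally show ?thesis by simp
qed

lemma g_closed: "(\<Sum>i\<in>{1..m}. (-1)^i * (1 / of_nat i) / (of_nat (m choose i) :: rat)) = - (1 - (-1)^m) / of_nat (m+1)"
proof (induction m)
  case 0 then show ?case by simp
next
  case (Suc m)
  have hh: "(\<Sum>i\<in>{1..m}. (-1)^i * (of_nat i * (1 / of_nat i)) / (of_nat (m choose i) :: rat)) = (\<Sum>i\<le>m. (-1)^i / (of_nat (m choose i) :: rat)) - 1"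
  proof -
    have "(\<Sum>i\<le>m. (-1)^i / (of_nat (m choose i) :: rat)) = 1 + (\<Sum>i\<in>{1..m}. (-1)^i / (of_nat (m choose i) :: rat))"
      by (simp add: atMost_atLeast0 sum.atLeast_Suc_atMost)
    moreover have "(\<Sum>i\<in>{1..m}. (-1)^i * (of_nat i * (1 / of_nat i)) / (of_nat (m choose i) :: rat)) = (\<Sum>i\<in>{1..m}. (-1)^i / (of_nat (m choose i) :: rat))"
      by (rule sum.cong) auto
    ultimately show ?thesis by simp
  qed
  have "-(1-(-1)^m)/of_nat (Suc m) - 1/of_nat (Suc m)*((1+(-1)^m)*of_nat (Suc m)/of_nat (Suc (Suc m)) - 1) + (- ((-1)^m))*(1/of_nat (Suc m))
     = -(1-(- ((-1)^m)))/(of_nat (Suc (Suc m)) :: rat)"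
    by (rule X) simp_all
  then show ?case unfolding split_step hh h_closed Suc.IH
    by (simp add: algebra_simps)
qed

lemma f_closed: "(\<Sum>i\<in>{1..m}. (-1)^i * (1 / of_nat i ^ 2) / (of_nat (m choose i) :: rat)) = (\<Sum>i\<in>{1..m}. (2 * (-1)^i + 1) / of_nat i ^ 2)"
proof (induction m)
  case 0 then show ?case by simp
next
  case (Suc m)
  have gg: "(\<Sum>i\<in>{1..m}. (-1)^i * (of_nat i * (1 / of_nat i ^ 2)) / (of_nat (m choose i) :: rat)) = (\<Sum>i\<in>{1..m}. (-1)^i * (1 / of_nat i) / (of_nat (m choose i) :: rat))"
    by (rule sum.cong) (auto simp: power2_eq_square)
  note ab = Y
  show ?case unfolding split_step gg g_closed Suc.IH
    using ab[where M="of_nat (Suc m)" and s="(-1)^m" and R="\<Sum>i\<in>{1..m}. (2 * (-1)^i + 1) / of_nat i ^ 2"]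
    by (simp add: sum.cl_ivl_Suc algebra_simps)
qed

lemma small_ndvd: "0 < a \<Longrightarrow> a < p \<Longrightarrow> \<not> int p dvd int a"
  by (auto simp: int_dvd_int_iff dest: dvd_imp_le)

lemma ndvd_coprime: "prime p \<Longrightarrow> \<not> int p dvd x \<Longrightarrow> coprime x (int p)"
proof -
  assume "prime p" "\<not> int p dvd x"
  moreover have "prime (int p)" using \<open>prime p\<close> by simp
  ultimately have "coprime (int p) x" using prime_imp_coprime by blast
  then show ?thesis by (simp add: coprime_commute)
qed

lemma fact_ndvd: "prime p \<Longrightarrow> m < p \<Longrightarrow> a dvd fact m \<Longrightarrow> \<not> int p dvd int a"
proof
  assume "prime p" "m < p" "a dvd fact m" "int p dvd int a"
  then have "p dvd fact m" by (metis dvd_trans int_dvd_int_iff)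
  then show False using \<open>prime p\<close> \<open>m < p\<close> by (simp add: prime_dvd_fact_iff)
qed

lemma choose_dvd_fact: "k \<le> n \<Longrightarrow> (n choose k) dvd fact n"
  using binomial_fact_lemma[of k n] by (metis dvd_triv_right)

lemma cb_abs: "(Suc j) * A = (Suc (Suc (2*j))) * B \<Longrightarrow> Suc j * B = Suc (2*j) * C \<Longrightarrow> Suc j * A = 2 * (2*j+1) * (C::nat)"
proof -
  assume e1: "(Suc j) * A = (Suc (Suc (2*j))) * B" and e2: "Suc j * B = Suc (2*j) * C"
  have "Suc j * (Suc j * A) = Suc j * (2 * (Suc j * B))" using e1 by simp
  also have "\<dots> = Suc j * (2 * (Suc (2*j) * C))" using e2 by simp
  finally have "Suc j * A = 2 * (Suc (2*j) * C)" by (simp only: mult_left_cancel)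
  then show ?thesis by simp
qed

lemma cb_rec: "Suc j * (Suc (Suc (2*j)) choose Suc j) = 2 * (2*j+1) * (2*j choose j)"
proof (rule cb_abs)
  show "Suc j * (Suc (Suc (2*j)) choose Suc j) = Suc (Suc (2*j)) * (Suc (2*j) choose j)"
    using binomial_absorption[of j "Suc (Suc (2*j))"] by (simp del: binomial_Suc_Suc)
  have "(Suc (2*j) - j) * (Suc (2*j) choose j) = Suc (2*j) * (2*j choose j)"
    using binomial_absorb_comp[of "Suc (2*j)" j] by (simp del: binomial_Suc_Suc)
  moreover have "Suc (2*j) - j = Suc j" by simp
  ultimately show "Suc j * (Suc (2*j) choose j) = Suc (2*j) * (2*j choose j)" by simp
qed

lemma L1: "fact j * (2*j choose j) = 2^j * (\<Prod>i<j. 2*i+1)"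
proof (induction j)
  case 0 then show ?case by simp
next
  case (Suc j)
  have "fact (Suc j) * (2 * Suc j choose Suc j) = fact j * (Suc j * (Suc (Suc (2*j)) choose Suc j))"
    by (simp add: algebra_simps del: binomial_Suc_Suc)
  also have "\<dots> = fact j * (2 * (2*j+1) * (2*j choose j))" by (simp only: cb_rec)
  also have "\<dots> = 2 * (2*j+1) * (fact j * (2*j choose j))" by (simp add: algebra_simps)
  also have "\<dots> = 2^Suc j * (\<Prod>i<Suc j. 2*i+1)" unfolding Suc.IH by (simp add: algebra_simps)
  finally show ?case .
qed

lemma L2: "j \<le> n \<Longrightarrow> fact j * (n choose j) = (\<Prod>i<j. n - i)"
proof (induction j)
  case 0 then show ?case by simp
next
  case (Suc j)
  have "Suc j * (n choose Suc j) = (n - j) * (n choose j)"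
    using binomial_absorption[of j n] binomial_absorb_comp[of n j] by simp
  have "fact (Suc j) * (n choose Suc j) = fact j * (Suc j * (n choose Suc j))"
    by (simp only: fact_Suc mult_ac of_nat_id)
  also have "\<dots> = (n - j) * (fact j * (n choose j))" using \<open>Suc j * (n choose Suc j) = (n - j) * (n choose j)\<close>
    by (simp only: mult_ac)
  finally have "fact (Suc j) * (n choose Suc j) = (n - j) * (fact j * (n choose j))" .
  then show ?case using Suc by simp
qed

lemma cb_cong:
  assumes p: "prime p" and pn: "p = 2*n+1" and j: "j \<le> n"
  shows "[int (2*j choose j) = (-4)^j * int (n choose j)] (mod int p)"
proof -
  have e1: "int (fact j * (2*j choose j)) = 2^j * (\<Prod>i<j. 2 * int i + 1)"
    unfolding L1 by (simp add: of_nat_prod add.commute)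
  have e2: "int (fact j) * ((-4)^j * int (n choose j)) = 2^j * (\<Prod>i<j. -2 * (int n - int i))"
  proof -
    have "int (fact j * (n choose j)) = (\<Prod>i<j. int n - int i)"
      unfolding L2[OF j] using j by (simp add: of_nat_prod of_nat_diff)
    moreover have "(\<Prod>i<j. -2 * (int n - int i)) = (-2)^j * (\<Prod>i<j. int n - int i)"
      by (simp only: prod.distrib prod_constant card_lessThan)
    moreover have "(-4::int)^j = 2^j * (-2)^j" by (simp add: power_mult_distrib[symmetric])
    ultimately show ?thesis by (simp add: algebra_simps)
  qed
  have "[(\<Prod>i<j. 2 * int i + 1) = (\<Prod>i<j. -2 * (int n - int i))] (mod int p)"
  proof (rule cong_prod)
    fix i assume "i \<in> {..<j}"
    have "2 * int i + 1 - (-2 * (int n - int i)) = int p" using pn by simp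
    then show "[2 * int i + 1 = -2 * (int n - int i)] (mod int p)"
      by (simp add: cong_iff_dvd_diff)
  qed
  then have "[2^j * (\<Prod>i<j. 2 * int i + 1) = 2^j * (\<Prod>i<j. -2 * (int n - int i))] (mod int p)"
    by (rule cong_scalar_left)
  then have "[int (fact j) * int (2*j choose j) = int (fact j) * ((-4)^j * int (n choose j))] (mod int p)"
    unfolding e1[symmetric] e2[symmetric] by simp
  moreover have "coprime (int (fact j)) (int p)"
  proof -
    have "\<not> int p dvd int (fact j)" using fact_ndvd[OF p, of j "fact j"] pn j by simp
    then show ?thesis using p by (intro ndvd_coprime) auto
  qed
  ultimately show ?thesis using cong_mult_lcancel by blast
qed

lemma ndvd_mult: "prime p \<Longrightarrow> \<not> int p dvd a \<Longrightarrow> \<not> int p dvd b \<Longrightarrow> \<not> int p dvd a * b"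
  using prime_dvd_mult_iff[of "int p" a b] by simp

lemma term_cong:
  assumes p: "prime p" and pn: "p = 2*n+1" and j: "j < n" and p3: "p > 3"
  shows "rat_cong (4^j / (of_nat (2*j choose j) * (2 * of_nat j + 1)^2))
                  ((-1)^j / (4 * of_nat (n choose j) * of_nat (n-j)^2)) p 1"
proof -
  define X where "X = (4::int)^j"
  define Y where "Y = int (2*j choose j) * (2 * int j + 1)^2"
  define U where "U = (-1::int)^j"
  define Z where "Z = 4 * int (n choose j) * (int n - int j)^2"
  have cY: "[Y = (-4)^j * int (n choose j) * (-2 * (int n - int j))^2] (mod int p)"
    unfolding Y_def
  proof (rule cong_mult)
    show "[int (2*j choose j) = (-4)^j * int (n choose j)] (mod int p)" using cb_cong[OF p pn] j by simp
    have "2 * int j + 1 - (-2 * (int n - int j)) = int p" using pn by simp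
    then have "[2 * int j + 1 = -2 * (int n - int j)] (mod int p)" by (simp add: cong_iff_dvd_diff)
    then show "[(2 * int j + 1)^2 = (-2 * (int n - int j))^2] (mod int p)" by (rule cong_pow)
  qed
  then have "[U * Y = U * ((-4)^j * int (n choose j) * (-2 * (int n - int j))^2)] (mod int p)"
    by (rule cong_scalar_left)
  moreover have "U * ((-4)^j * int (n choose j) * (-2 * (int n - int j))^2) = X * Z"
  proof -
    have ux: "U * (-4)^j = X" unfolding U_def X_def by (simp add: power_mult_distrib[symmetric])
    have sq: "(-2 * (int n - int j))^2 = 4 * (int n - int j)^2" by (simp add: power2_eq_square algebra_simps)
    have "U * ((-4)^j * int (n choose j) * (-2 * (int n - int j))^2) = (U * (-4)^j) * (4 * int (n choose j) * (int n - int j)^2)"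
      unfolding sq by (simp only: mult_ac)
    then show ?thesis unfolding ux Z_def .
  qed
  ultimately have c: "[X * Z = U * Y] (mod int p)" by (simp add: cong_sym)
  have nY: "\<not> int p dvd Y" unfolding Y_def
  proof (rule ndvd_mult[OF p])
    show "\<not> int p dvd int (2*j choose j)"
      by (rule fact_ndvd[OF p, of "2*j"]) (use pn j choose_dvd_fact in auto)
    have "\<not> int p dvd int (2*j+1)" by (rule small_ndvd) (use pn j in auto)
    then have "\<not> int p dvd (2 * int j + 1)" by (simp add: add.commute)
    then show "\<not> int p dvd (2 * int j + 1)^2" using p by (simp add: prime_dvd_power_iff)
  qed
  have nZ: "\<not> int p dvd Z" unfolding Z_def
  proof (intro ndvd_mult[OF p])
    have "p \<noteq> 4" using pn by presburger
    then show "\<not> int p dvd 4" using small_ndvd[of 4 p] p3 by simp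
    show "\<not> int p dvd int (n choose j)"
      by (rule fact_ndvd[OF p, of n]) (use pn j choose_dvd_fact in auto)
    have "\<not> int p dvd int (n-j)" by (rule small_ndvd) (use pn j in auto)
    then have "\<not> int p dvd (int n - int j)" using j by (simp add: of_nat_diff)
    then show "\<not> int p dvd (int n - int j)^2" using p by (simp add: prime_dvd_power_iff)
  qed
  have "rat_cong (of_int X / of_int Y) (of_int U / of_int Z) p 1" by (rule rat_cong_frac[OF p c nY nZ])
  moreover have "(of_int X / of_int Y :: rat) = 4^j / (of_nat (2*j choose j) * (2 * of_nat j + 1)^2)"
    unfolding X_def Y_def by simp
  moreover have "(of_int U / of_int Z :: rat) = (-1)^j / (4 * of_nat (n choose j) * of_nat (n-j)^2)"
    unfolding U_def Z_def using j by (simp add: of_nat_diff)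
  ultimately show ?thesis by simp
qed

lemma fact_add_prod: "fact (m + r) = fact m * (\<Prod>i\<in>{1..r}. m + i)"
proof (induction r)
  case 0 then show ?case by simp
next
  case (Suc r)
  have "fact (m + Suc r) = (m + Suc r) * fact (m + r)" by simp
  also have "\<dots> = fact m * (\<Prod>i\<in>{1..Suc r}. m + i)"
    unfolding Suc by (simp add: prod.cl_ivl_Suc algebra_simps)
  finally show ?case .
qed

lemma prod_shift_cong: "[(\<Prod>i\<in>{1..r}. int (c*p + i)) = int (fact r)] (mod int p)"
proof -
  have "[(\<Prod>i\<in>{1..r}. int (c*p + i)) = (\<Prod>i\<in>{1..r}. int i)] (mod int p)"
    by (rule cong_prod) (simp add: cong_iff_dvd_diff)
  then show ?thesis by (simp add: fact_prod of_nat_prod)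
qed

lemma wilson_gen:
  assumes p: "prime p" and m: "m \<le> p - 1"
  shows "[int (fact (p-1-m)) * int (fact m) * (-1)^m = -1] (mod int p)"
  using m
proof (induction m)
  case 0 then show ?case using wilson_theorem[OF p] by simp
next
  case (Suc m)
  then have m: "m < p - 1" by simp
  have e: "p - 1 - m = Suc (p - 1 - Suc m)" using m by simp
  have "int (fact (p-1-m)) = int (p-1-m) * int (fact (p-1-Suc m))"
    unfolding e by (simp only: fact_Suc of_nat_mult) (simp add: e[symmetric])
  moreover have "[int (p-1-m) = - int (Suc m)] (mod int p)"
  proof -
    have "int (p-1-m) - (- int (Suc m)) = int p" using m by (simp add: of_nat_diff)
    then show ?thesis by (simp add: cong_iff_dvd_diff)
  qed
  ultimately have c1: "[int (fact (p-1-m)) * (int (fact m) * (-1)^m) = - int (Suc m) * int (fact (p-1-Suc m)) * (int (fact m) * (-1)^m)] (mod int p)"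
    by (simp add: cong_scalar_right)
  have eq: "- int (Suc m) * int (fact (p-1-Suc m)) * (int (fact m) * (-1)^m) = int (fact (p-1-Suc m)) * int (fact (Suc m)) * (-1)^(Suc m)"
    by (simp add: algebra_simps)
  have ih: "[int (fact (p-1-m)) * (int (fact m) * (-1)^m) = -1] (mod int p)" using Suc.IH m by (simp add: mult.assoc)
  show ?case using cong_trans[OF cong_sym[OF c1] ih] unfolding eq .
qed

lemma two_pow_p: assumes p: "prime p" "p > 2" shows "[2^p = (2::int)] (mod int p)"
proof -
  have "\<not> p dvd 2" using p by (auto dest: dvd_imp_le)
  then have "[2^(p-1) = 1] (mod p)" using fermat_theorem[OF p(1), of 2] by simp
  then have "[2 * 2^(p-1) = 2 * 1] (mod p)" by (rule cong_scalar_left)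
  moreover have "2 * 2^(p-1) = (2::nat)^p" using p by (simp add: power_eq_if)
  ultimately have "[2^p = 2] (mod p)" by simp
  then have "[int (2^p) = int 2] (mod int p)" by (simp only: cong_int_iff)
  then show ?thesis by simp
qed

lemma cong_ndvd: assumes "[a = b] (mod int p)" "\<not> int p dvd b" shows "\<not> int p dvd a"
  using cong_dvd_iff[OF assms(1)] assms(2) by blast

lemma rat_cong_frac2:
  assumes p: "prime p" and "[X = X'] (mod int p)" "[Y = Y'] (mod int p)" "\<not> int p dvd Y" "\<not> int p dvd Y'"
  shows "rat_cong (of_int X / of_int Y) (of_int X' / of_int Y') p 1"
proof (rule rat_cong_frac[OF p _ assms(4,5)])
  have "[X * Y' = X' * Y'] (mod int p)" using assms(2) by (rule cong_scalar_right)
  moreover have "[X' * Y' = X' * Y] (mod int p)" using cong_sym[OF assms(3)] by (rule cong_scalar_left)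
  ultimately show "[X * Y' = X' * Y] (mod int p)" by (rule cong_trans)
qed

lemma G_alg:
  fixes p W V R T Pk fk fpk f2k te d :: rat
  assumes "p \<noteq> 0" "W \<noteq> 0" "V \<noteq> 0" "R \<noteq> 0" "T \<noteq> 0" "Pk \<noteq> 0" "fk \<noteq> 0" "fpk \<noteq> 0" "f2k \<noteq> 0" "te \<noteq> 0" "d \<noteq> 0"
  shows "p^2 * ((2*p^2*W*V)/((p*W)*(p*W))) * ((2*p^2*W*V*R)/((p*W*Pk)*(p*W*Pk))) * ((p*W*T)/(fpk*fpk)) * ((p*W*Pk)/((p*W)*fk)) / (te * d * (f2k/(fk*fk)))
     = p^3 * (4*V^2*R*T*fk/(W*Pk*fpk^2*te*d*f2k))"
  using assms by (simp add: field_simps power2_eq_square power3_eq_cube)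

lemma G_exact:
  assumes p: "prime p" "p > 3" and k: "1 \<le> k" "2*k < p"
  defines "W \<equiv> fact (p-1) :: nat"
    and "Pk \<equiv> (\<Prod>i\<in>{1..k}. 1*p+i)"
    and "V \<equiv> (\<Prod>i\<in>{1..p-1}. 1*p+i)"
    and "R \<equiv> (\<Prod>i\<in>{1..2*k}. 2*p+i)"
    and "T \<equiv> (\<Prod>i\<in>{1..p-2*k}. 1*p+i)"
  shows "G p k = of_nat (p^3) * (4 * of_nat V^2 * of_nat R * of_nat T * of_nat (fact k)
     / (of_nat W * of_nat Pk * of_nat (fact (p-k))^2 * 2^(8*p-2*k-4) * of_nat (2*p+2*k-1) * of_nat (fact (2*k))))"
proof -
  have p0: "p > 0" using p by auto
  have fp: "fact p = p * W" unfolding W_def using fact_reduce[OF p0, where 'a=nat] by simp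
  have fpk: "fact (p+k) = fact p * Pk" unfolding Pk_def using fact_add_prod[of p k] by simp
  have f2p: "fact (2*p) = fact p * V * (2*p)"
  proof -
    have "fact (2*p) = fact (p+p)" by (simp add: mult_2)
    also have "\<dots> = fact p * (\<Prod>i\<in>{1..p}. p+i)" by (rule fact_add_prod)
    also have "(\<Prod>i\<in>{1..p}. p+i) = (\<Prod>i\<in>{1..Suc (p-1)}. p+i)" using p0 by simp
    also have "\<dots> = V * (p + Suc (p-1))" unfolding V_def by (simp add: prod.cl_ivl_Suc)
    also have "p + Suc (p-1) = 2*p" using p0 by simp
    finally show ?thesis by (simp add: mult.assoc)
  qed
  have f2pk: "fact (2*p+2*k) = fact (2*p) * R" unfolding R_def using fact_add_prod[of "2*p" "2*k"] by simp
  have f2m: "fact (2*p-2*k) = fact p * T"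
  proof -
    have "2*p-2*k = p + (p-2*k)" using k by simp
    then show ?thesis unfolding T_def using fact_add_prod[of p "p-2*k"] by simp
  qed
  have b1: "(of_nat (2*p choose p) :: rat) = fact (2*p) / (fact p * fact p)"
    using binomial_fact[of p "2*p", where 'a=rat] by simp
  have b2: "(of_nat ((2*p+2*k) choose (p+k)) :: rat) = fact (2*p+2*k) / (fact (p+k) * fact (p+k))"
    using binomial_fact[of "p+k" "2*p+2*k", where 'a=rat] by (simp add: add.commute)
  have b3: "(of_nat ((2*p-2*k) choose (p-k)) :: rat) = fact (2*p-2*k) / (fact (p-k) * fact (p-k))"
  proof -
    have "2*p-2*k - (p-k) = p-k" using k by simp
    then show ?thesis using binomial_fact[of "p-k" "2*p-2*k", where 'a=rat] k by simp
  qed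
  have b4: "(of_nat ((p+k) choose p) :: rat) = fact (p+k) / (fact p * fact k)"
    using binomial_fact[of p "p+k", where 'a=rat] by simp
  have b5: "(of_nat ((2*k) choose k) :: rat) = fact (2*k) / (fact k * fact k)"
    using binomial_fact[of k "2*k", where 'a=rat] by simp
  have r1: "(fact p :: rat) = of_nat p * of_nat W" using arg_cong[OF fp, of "of_nat :: nat \<Rightarrow> rat"] by simp
  have r2: "(fact (p+k) :: rat) = of_nat p * of_nat W * of_nat Pk" using arg_cong[OF fpk, of "of_nat :: nat \<Rightarrow> rat"] fp by simp
  have r3: "(fact (2*p) :: rat) = 2 * (of_nat p)^2 * of_nat W * of_nat V"
    using arg_cong[OF f2p, of "of_nat :: nat \<Rightarrow> rat"] fp by (simp add: power2_eq_square algebra_simps)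
  have r4: "(fact (2*p+2*k) :: rat) = 2 * (of_nat p)^2 * of_nat W * of_nat V * of_nat R"
    using arg_cong[OF f2pk, of "of_nat :: nat \<Rightarrow> rat"] r3 by simp
  have r5: "(fact (2*p-2*k) :: rat) = of_nat p * of_nat W * of_nat T"
    using arg_cong[OF f2m, of "of_nat :: nat \<Rightarrow> rat"] fp by simp
  have nz: "(of_nat p :: rat) \<noteq> 0" "(of_nat W :: rat) \<noteq> 0" "(of_nat V :: rat) \<noteq> 0" "(of_nat R :: rat) \<noteq> 0"
    "(of_nat T :: rat) \<noteq> 0" "(of_nat Pk :: rat) \<noteq> 0" "(of_nat (fact k) :: rat) \<noteq> 0" "(of_nat (fact (p-k)) :: rat) \<noteq> 0"
    "(of_nat (fact (2*k)) :: rat) \<noteq> 0" "(2^(8*p-2*k-4) :: rat) \<noteq> 0" "(of_nat (2*p+2*k-1) :: rat) \<noteq> 0"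
    using p0 k unfolding W_def V_def R_def T_def Pk_def by auto
  have "G p k = of_nat p^2 * (fact (2*p) / (fact p * fact p)) * (fact (2*p+2*k) / (fact (p+k) * fact (p+k)))
     * (fact (2*p-2*k) / (fact (p-k) * fact (p-k))) * (fact (p+k) / (fact p * fact k))
     / (2^(8*p-2*k-4) * of_nat (2*p+2*k-1) * (fact (2*k) / (fact k * fact k)))"
    unfolding G_def b1[symmetric] b2[symmetric] b3[symmetric] b4[symmetric] b5[symmetric] by simp
  also have "\<dots> = of_nat p^2 * ((2*(of_nat p)^2*of_nat W*of_nat V)/((of_nat p*of_nat W)*(of_nat p*of_nat W)))
     * ((2*(of_nat p)^2*of_nat W*of_nat V*of_nat R)/((of_nat p*of_nat W*of_nat Pk)*(of_nat p*of_nat W*of_nat Pk)))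
     * ((of_nat p*of_nat W*of_nat T)/(of_nat (fact (p-k))*of_nat (fact (p-k))))
     * ((of_nat p*of_nat W*of_nat Pk)/((of_nat p*of_nat W)*of_nat (fact k)))
     / (2^(8*p-2*k-4) * of_nat (2*p+2*k-1) * (of_nat (fact (2*k))/(of_nat (fact k)*of_nat (fact k))))"
    unfolding r1 r2 r3 r4 r5 by simp
  also have "\<dots> = of_nat p^3 * (4 * of_nat V^2 * of_nat R * of_nat T * of_nat (fact k)
     / (of_nat W * of_nat Pk * of_nat (fact (p-k))^2 * 2^(8*p-2*k-4) * of_nat (2*p+2*k-1) * of_nat (fact (2*k))))"
    by (rule G_alg[OF nz(1,2,3,4,5,6,7,8,9,10,11)])
  finally show ?thesis by simp
qed

lemma ndvd_pow: "prime p \<Longrightarrow> \<not> int p dvd x \<Longrightarrow> \<not> int p dvd x^m"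
proof (cases "m = 0")
  case True
  assume "prime p" then show ?thesis using True by (auto simp: prime_gt_1_nat)
next
  case False
  assume "prime p" "\<not> int p dvd x"
  moreover have "prime (int p)" using \<open>prime p\<close> by simp
  ultimately show ?thesis using False prime_dvd_power_iff by blast
qed

lemma ndvd_2: "prime p \<Longrightarrow> p > 2 \<Longrightarrow> \<not> int p dvd 2"
  using small_ndvd[of 2 p] by simp

lemma ndvd_m1: assumes "prime p" shows "\<not> int p dvd -1"
proof -
  have "1 < p" using assms by (rule prime_gt_1_nat)
  then have "\<not> int p dvd int 1" using small_ndvd[of 1 p] by simp
  then show ?thesis by simp
qed

lemma step4_abs: "(F2::rat) \<noteq> 0 \<Longrightarrow> Fj \<noteq> 0 \<Longrightarrow> D \<noteq> 0 \<Longrightarrow>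
   -4*1*Fj^2*(64*Q)/(1*256*D*(D*F2)) = -(Q/((F2/(Fj*Fj))*D^2))"
  by (simp add: field_simps power2_eq_square)

lemma step4:
  assumes k: "1 \<le> k"
  shows "(of_int (-4 * 1 * int (fact (k-1))^2 * 2^(2*k+4)) / of_int (1 * 2^8 * int (2*k-1) * int (fact (2*k-1))) :: rat)
       = - (4^(k-1) / (of_nat (2*(k-1) choose (k-1)) * (2 * of_nat (k-1) + 1)^2))"
proof -
  obtain j where j: "k = Suc j" using k by (cases k) auto
  have a: "2*k-1 = Suc (2*j)" "2*k+4 = 2*j + 6" "k - 1 = j" using j by auto
  have f: "int (fact (Suc (2*j))) = int (Suc (2*j)) * int (fact (2*j))" by (simp only: fact_Suc of_nat_mult of_nat_id)
  have c: "(of_nat (2*j choose j) :: rat) = fact (2*j) / (fact j * fact j)"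
    using binomial_fact[of j "2*j", where 'a=rat] by (simp add: mult_2)
  have nz: "(fact (2*j) :: rat) \<noteq> 0" "(fact j :: rat) \<noteq> 0" "(of_nat (Suc (2*j)) :: rat) \<noteq> 0" by auto
  have p4: "(2::int)^(2*j+6) = 64 * 4^j" by (simp add: power_add power_mult)
  have D: "(2 * of_nat j + 1 :: rat) = of_nat (Suc (2*j))" by simp
  have "(of_int (-4 * 1 * int (fact (k-1))^2 * 2^(2*k+4)) / of_int (1 * 2^8 * int (2*k-1) * int (fact (2*k-1))) :: rat)
     = -4*1*(fact j)^2*(64*4^j)/(1*256*of_nat (Suc (2*j))*(of_nat (Suc (2*j))*fact (2*j)))"
    unfolding a f p4 by simp
  also have "\<dots> = - (4^j / ((fact (2*j) / (fact j * fact j)) * (of_nat (Suc (2*j)))^2))"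
    by (rule step4_abs[OF nz])
  finally show ?thesis unfolding a c[symmetric] D .
qed

lemma x_cong:
  assumes p: "prime p" "p > 3" and k: "1 \<le> k" "2*k < p"
  defines "W \<equiv> fact (p-1) :: nat"
    and "Pk \<equiv> (\<Prod>i\<in>{1..k}. 1*p+i)"
    and "V \<equiv> (\<Prod>i\<in>{1..p-1}. 1*p+i)"
    and "R \<equiv> (\<Prod>i\<in>{1..2*k}. 2*p+i)"
    and "T \<equiv> (\<Prod>i\<in>{1..p-2*k}. 1*p+i)"
  shows "rat_cong (4 * of_nat V^2 * of_nat R * of_nat T * of_nat (fact k)
     / (of_nat W * of_nat Pk * of_nat (fact (p-k))^2 * 2^(8*p-2*k-4) * of_nat (2*p+2*k-1) * of_nat (fact (2*k))))
     (- (4^(k-1) / (of_nat (2*(k-1) choose (k-1)) * (2 * of_nat (k-1) + 1)^2))) p 1"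
proof -
  define e where "e = 8*p-2*k-4"
  have p2: "p > 2" using p by simp
  have cW: "[int W = -1] (mod int p)" unfolding W_def using wilson_theorem[OF p(1)] by simp
  have cV: "[int V = -1] (mod int p)"
  proof -
    have "[int V = int (fact (p-1))] (mod int p)" unfolding V_def using prod_shift_cong[of 1 p "p-1"]
      by (simp add: of_nat_prod)
    then show ?thesis using cW unfolding W_def by (rule cong_trans)
  qed
  have cR: "[int R = int (fact (2*k))] (mod int p)" unfolding R_def using prod_shift_cong[of 2 p "2*k"]
    by (simp add: of_nat_prod)
  have cT: "[int T = int (fact (p-2*k))] (mod int p)" unfolding T_def using prod_shift_cong[of 1 p "p-2*k"]
    by (simp add: of_nat_prod)
  have cPk: "[int Pk = int (fact k)] (mod int p)" unfolding Pk_def using prod_shift_cong[of 1 p "k"]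
    by (simp add: of_nat_prod)
  have cd: "[int (2*p+2*k-1) = int (2*k-1)] (mod int p)"
  proof -
    have "int (2*p+2*k-1) - int (2*k-1) = int p * 2" using k by (simp add: of_nat_diff)
    then show ?thesis by (simp add: cong_iff_dvd_diff)
  qed
  have nf: "\<not> int p dvd int (fact m)" if "m < p" for m
    using fact_ndvd[OF p(1) that, of "fact m"] by simp
  have nW: "\<not> int p dvd int W" unfolding W_def using nf[of "p-1"] p by simp
  have nPk: "\<not> int p dvd int Pk" using cong_ndvd[OF cPk nf[of k]] k by simp
  have nfpk: "\<not> int p dvd int (fact (p-k))" using nf[of "p-k"] k by simp
  have n2e: "\<not> int p dvd 2^e" by (rule ndvd_pow[OF p(1) ndvd_2[OF p(1) p2]])
  have n2k1: "\<not> int p dvd int (2*k-1)" by (rule small_ndvd) (use k in auto)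
  have nd: "\<not> int p dvd int (2*p+2*k-1)" by (rule cong_ndvd[OF cd n2k1])
  have nf2k: "\<not> int p dvd int (fact (2*k))" using nf[of "2*k"] k by simp
  define X where "X = 4 * int V^2 * int R * int T * int (fact k)"
  define Y where "Y = int W * int Pk * int (fact (p-k))^2 * 2^e * int (2*p+2*k-1) * int (fact (2*k))"
  define X1 where "X1 = 4 * (-1)^2 * int (fact (2*k)) * int (fact (p-2*k)) * int (fact k)"
  define Y1 where "Y1 = (-1) * int (fact k) * int (fact (p-k))^2 * 2^e * int (2*k-1) * int (fact (2*k))"
  have cX: "[X = X1] (mod int p)" unfolding X_def X1_def
    by (intro cong_mult cong_pow cong_refl cV cR cT)
  have cY: "[Y = Y1] (mod int p)" unfolding Y_def Y1_def
    by (intro cong_mult cong_pow cong_refl cW cPk cd)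
  have nY: "\<not> int p dvd Y" unfolding Y_def
    by (intro ndvd_mult[OF p(1)] ndvd_pow[OF p(1)] nW nPk nfpk n2e nd nf2k)
  have nY1: "\<not> int p dvd Y1" unfolding Y1_def
    by (intro ndvd_mult[OF p(1)] ndvd_pow[OF p(1)] ndvd_m1[OF p(1)] nf[of k] nfpk n2e n2k1 nf2k) (use k in auto)
  have s1: "rat_cong (of_int X / of_int Y) (of_int X1 / of_int Y1) p 1"
    by (rule rat_cong_frac2[OF p(1) cX cY nY nY1])
  have nz2k1: "(of_nat (2*k-1) :: rat) \<noteq> 0" using k by simp
  have e1: "(of_int X1 / of_int Y1 :: rat) = of_int (-4 * int (fact (p-2*k))) / of_int (int (fact (p-k))^2 * 2^e * int (2*k-1))"
    unfolding X1_def Y1_def using nz2k1 by (simp add: field_simps)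
  define X2 where "X2 = -4 * (int (fact (p-2*k)) * int (fact (2*k-1))) * int (fact (k-1))^2 * 2^(2*k+4)"
  define Y2 where "Y2 = (int (fact (p-k)) * int (fact (k-1)))^2 * 2^(8*p) * int (2*k-1) * int (fact (2*k-1))"
  have ee: "(2::int)^(8*p) = 2^e * 2^(2*k+4)"
  proof -
    have "8*p = e + (2*k+4)" unfolding e_def using k by simp
    then show ?thesis by (simp add: power_add)
  qed
  have e2: "(of_int (-4 * int (fact (p-2*k))) / of_int (int (fact (p-k))^2 * 2^e * int (2*k-1)) :: rat) = of_int X2 / of_int Y2"
    unfolding X2_def Y2_def ee using nz2k1 by (simp add: field_simps power2_eq_square)
  define X3 where "X3 = -4 * 1 * int (fact (k-1))^2 * 2^(2*k+4)"
  define Y3 where "Y3 = 1 * 2^8 * int (2*k-1) * int (fact (2*k-1))"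
  obtain j where j: "k = Suc j" using k by (cases k) auto
  have cA: "[int (fact (p-2*k)) * int (fact (2*k-1)) = 1] (mod int p)"
  proof -
    have "[int (fact (p-1-(2*k-1))) * int (fact (2*k-1)) * (-1)^(2*k-1) = -1] (mod int p)"
      by (rule wilson_gen[OF p(1)]) (use k in simp)
    moreover have "p-1-(2*k-1) = p-2*k" using k by simp
    moreover have "(-1::int)^(2*k-1) = -1" unfolding j by simp
    ultimately have "[(-1) * (int (fact (p-2*k)) * int (fact (2*k-1))) = (-1) * 1] (mod int p)"
      by (simp add: mult.commute)
    then have "[(-1) * ((-1) * (int (fact (p-2*k)) * int (fact (2*k-1)))) = (-1) * ((-1) * 1)] (mod int p)"
      by (rule cong_scalar_left)
    then show ?thesis by simp
  qed
  have cB: "[(int (fact (p-k)) * int (fact (k-1)))^2 = 1] (mod int p)"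
  proof -
    have "[int (fact (p-1-(k-1))) * int (fact (k-1)) * (-1)^(k-1) = -1] (mod int p)"
      by (rule wilson_gen[OF p(1)]) (use k in simp)
    moreover have "p-1-(k-1) = p-k" using k by simp
    ultimately have "[int (fact (p-k)) * int (fact (k-1)) * (-1)^(k-1) = -1] (mod int p)" by simp
    then have "[(int (fact (p-k)) * int (fact (k-1)) * (-1)^(k-1))^2 = (-1)^2] (mod int p)" by (rule cong_pow)
    moreover have "(int (fact (p-k)) * int (fact (k-1)) * (-1)^(k-1))^2 = (int (fact (p-k)) * int (fact (k-1)))^2"
      by (simp add: power_mult_distrib power_mult[symmetric] mult.commute[of _ 2])
    ultimately show ?thesis by simp
  qed
  have cC: "[(2::int)^(8*p) = 2^8] (mod int p)"
  proof -
    have "[((2::int)^p)^8 = 2^8] (mod int p)" by (rule cong_pow[OF two_pow_p[OF p(1) p2]])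
    then show ?thesis by (simp add: power_mult[symmetric] mult.commute)
  qed
  have cX2: "[X2 = X3] (mod int p)" unfolding X2_def X3_def
    by (intro cong_mult cong_pow cong_refl cA)
  have cY2: "[Y2 = Y3] (mod int p)" unfolding Y2_def Y3_def
    by (intro cong_mult cong_refl cB cC)
  have nk1: "\<not> int p dvd int (fact (k-1))" using nf[of "k-1"] k by simp
  have n2k1f: "\<not> int p dvd int (fact (2*k-1))" using nf[of "2*k-1"] k by simp
  have n1: "\<not> int p dvd 1" using p by (simp add: prime_gt_1_nat)
  have nY2: "\<not> int p dvd Y2" unfolding Y2_def
    by (intro ndvd_mult[OF p(1)] ndvd_pow[OF p(1)] nfpk nk1 ndvd_2[OF p(1) p2] n2k1 n2k1f)
  have nY3: "\<not> int p dvd Y3" unfolding Y3_def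
    by (intro ndvd_mult[OF p(1)] ndvd_pow[OF p(1)] n1 ndvd_2[OF p(1) p2] n2k1 n2k1f)
  have s3: "rat_cong (of_int X2 / of_int Y2) (of_int X3 / of_int Y3) p 1"
    by (rule rat_cong_frac2[OF p(1) cX2 cY2 nY2 nY3])
  have e4: "(of_int X3 / of_int Y3 :: rat) = - (4^(k-1) / (of_nat (2*(k-1) choose (k-1)) * (2 * of_nat (k-1) + 1)^2))"
    unfolding X3_def Y3_def by (rule step4[OF k(1)])
  have e0: "(4 * of_nat V^2 * of_nat R * of_nat T * of_nat (fact k)
     / (of_nat W * of_nat Pk * of_nat (fact (p-k))^2 * 2^(8*p-2*k-4) * of_nat (2*p+2*k-1) * of_nat (fact (2*k))) :: rat)
     = of_int X / of_int Y"
    unfolding X_def Y_def e_def by simp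
  have "rat_cong (of_int X / of_int Y) (of_int X3 / of_int Y3) p 1"
    using rat_cong_trans[OF p(1) s1] s3 unfolding e1 e2 by blast
  then show ?thesis unfolding e0 e4 .
qed

lemma inv_pow_cong:
  assumes p: "prime p" and a: "0 < a" "a < p" and m: "m + 2 = p - 1"
  shows "rat_cong (1 / of_nat a ^ 2) (of_int (int a ^ m)) p 1"
proof -
  have "\<not> p dvd a" using a by (auto dest: dvd_imp_le)
  then have "[a^(p-1) = 1] (mod p)" using fermat_theorem[OF p] by simp
  then have "[int a^(p-1) = 1] (mod int p)" by (metis cong_int_iff of_nat_1 of_nat_power)
  moreover have "int a^(p-1) = int a ^ m * int a ^ 2" by (simp only: m[symmetric] power_add)
  ultimately have c: "[1 * 1 = int a ^ m * int a ^ 2] (mod int p)" by (simp add: cong_sym)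
  have n: "\<not> int p dvd int a ^ 2" by (rule ndvd_pow[OF p small_ndvd[OF a]])
  have n1: "\<not> int p dvd 1" using ndvd_m1[OF p] by simp
  have "rat_cong (of_int 1 / of_int (int a ^ 2)) (of_int (int a ^ m) / of_int 1) p 1"
    by (rule rat_cong_frac[OF p c n n1])
  then show ?thesis by simp
qed

lemma pint_inv_sq: "prime p \<Longrightarrow> 0 < a \<Longrightarrow> a < p \<Longrightarrow> pint p (1 / of_nat a ^ 2)"
  using pint_frac[of p "int a ^ 2" 1] ndvd_pow small_ndvd by simp

lemma half_cong:
  assumes p: "prime p" "p > 2"
  shows "rat_cong (of_int (2^(p-2))) (1/2) p 1"
proof -
  have "\<not> p dvd 2" using p by (auto dest: dvd_imp_le)
  then have "[2^(p-1) = 1] (mod p)" using fermat_theorem[OF p(1), of 2] by simp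
  then have "[int 2^(p-1) = 1] (mod int p)" by (metis cong_int_iff of_nat_1 of_nat_power)
  moreover have "(2::int)^(p-1) = 2^(p-2) * 2"
  proof -
    have "p - 1 = Suc (p-2)" using p by simp
    then show ?thesis by (simp only: power_Suc2)
  qed
  ultimately have c: "[2^(p-2) * 2 = 1 * (1::int)] (mod int p)" by simp
  have "rat_cong (of_int (2^(p-2)) / of_int 1) (of_int 1 / of_int 2) p 1"
    by (rule rat_cong_frac[OF p(1) c]) (use ndvd_m1[OF p(1)] ndvd_2[OF p] in simp_all)
  then show ?thesis by simp
qed

theorem lemma2p3:
  fixes p :: nat
  assumes "prime p" and "p > 3"
  shows "rat_cong (\<Sum>k\<in>{1..(p - 1) div 2}. G p k)
                  (- (of_nat (p^3) * of_int (euler_num (p - 3)))) p 4"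
proof -
  note pp = assms(1) and p3 = assms(2)
  have p2: "p > 2" using p3 by simp
  define n where "n = (p-1) div 2"
  have odd: "odd p" using pp p3 prime_odd_nat by auto
  then have pn: "p = 2*n+1" unfolding n_def by presburger
  define yk where "yk k = - (4^(k-1) / (of_nat (2*(k-1) choose (k-1)) * (2 * of_nat (k-1) + 1)^2) :: rat)" for k
  have ex: "\<forall>k\<in>{1..n}. \<exists>x. G p k = of_nat (p^3) * x \<and> rat_cong x (yk k) p 1"
  proof
    fix k assume k: "k \<in> {1..n}"
    then have k1: "1 \<le> k" and k2: "2*k < p" using pn by auto
    show "\<exists>x. G p k = of_nat (p^3) * x \<and> rat_cong x (yk k) p 1"
      using G_exact[OF pp p3 k1 k2] x_cong[OF pp p3 k1 k2] unfolding yk_def by blast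
  qed
  then obtain xf where xf: "\<forall>k\<in>{1..n}. G p k = of_nat (p^3) * xf k \<and> rat_cong (xf k) (yk k) p 1"
    by (metis bchoice)
  have sG: "(\<Sum>k\<in>{1..n}. G p k) = of_nat (p^3) * (\<Sum>k\<in>{1..n}. xf k)"
    using xf by (simp add: sum_distrib_left)
  have c1: "rat_cong (\<Sum>k\<in>{1..n}. xf k) (\<Sum>k\<in>{1..n}. yk k) p 1"
    using xf by (intro rat_cong_sum[OF pp]) auto
  define aj where "aj j = 4^j / (of_nat (2*j choose j) * (2 * of_nat j + 1)^2 :: rat)" for j
  define bj where "bj j = (-1)^j / (4 * of_nat (n choose j) * of_nat (n-j)^2 :: rat)" for j
  have e1: "(\<Sum>k\<in>{1..n}. yk k) = - (\<Sum>j<n. aj j)"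
  proof -
    have "(\<Sum>k\<in>{1..n}. yk k) = (\<Sum>j<n. yk (Suc j))"
      using sum.atLeast1_atMost_eq[of yk n] by simp
    also have "\<dots> = (\<Sum>j<n. - aj j)" unfolding yk_def aj_def by simp
    finally show ?thesis by (simp add: sum_negf)
  qed
  have c2: "rat_cong (\<Sum>j<n. aj j) (\<Sum>j<n. bj j) p 1"
    unfolding aj_def bj_def by (intro rat_cong_sum[OF pp] term_cong[OF pp pn _ p3]) auto
  define A where "A = (\<Sum>i\<in>{1..n}. (-1)^i * (1 / of_nat i ^ 2) :: rat)"
  define H where "H = (\<Sum>i\<in>{1..n}. 1 / of_nat i ^ 2 :: rat)"
  have e2: "(\<Sum>j<n. bj j) = (1/4) * (-1)^n * (2 * A + H)"
  proof -
    have "(\<Sum>j<n. bj j) = (\<Sum>i\<in>{1..n}. bj (n - i))"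
      by (rule sum.reindex_bij_witness[where i="\<lambda>i. n - i" and j="\<lambda>j. n - j"]) auto
    also have "\<dots> = (\<Sum>i\<in>{1..n}. (1/4) * (-1)^n * ((-1)^i * (1 / of_nat i ^ 2) / of_nat (n choose i)))"
    proof (rule sum.cong[OF refl])
      fix i assume i: "i \<in> {1..n}"
      have c: "(-1::rat)^(n-i) = (-1)^n * (-1)^i"
      proof -
        have "n = (n-i) + i" using i by simp
        then have "(-1::rat)^n = (-1)^(n-i) * (-1)^i" by (metis power_add)
        then have "(-1::rat)^n * (-1)^i = (-1)^(n-i) * ((-1)^i * (-1)^i)" by (simp add: algebra_simps)
        also have "(-1::rat)^i * (-1)^i = 1" by (simp add: power_add[symmetric])
        finally show ?thesis by simp
      qed
      have b: "n choose (n-i) = n choose i" using i by (simp add: binomial_symmetric[symmetric])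
      have d: "n - (n - i) = i" using i by simp
      show "bj (n - i) = (1/4) * (-1)^n * ((-1)^i * (1 / of_nat i ^ 2) / of_nat (n choose i))"
        unfolding bj_def c b d by (simp add: field_simps)
    qed
    also have "\<dots> = (1/4) * (-1)^n * (\<Sum>i\<in>{1..n}. (-1)^i * (1 / of_nat i ^ 2) / of_nat (n choose i))"
      by (simp add: sum_distrib_left)
    also have "(\<Sum>i\<in>{1..n}. (-1)^i * (1 / of_nat i ^ 2) / (of_nat (n choose i) :: rat)) = (\<Sum>i\<in>{1..n}. (2 * (-1)^i + 1) / of_nat i ^ 2)"
      by (rule f_closed)
    also have "\<dots> = 2 * A + H" unfolding A_def H_def
      by (simp add: sum_distrib_left sum.distrib[symmetric] add_divide_distrib)
    finally show ?thesis .
  qed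
  have c3: "rat_cong H 0 p 1"
  proof -
    have "rat_cong H (\<Sum>i\<in>{1..n}. of_int (int i ^ (p-3))) p 1"
      unfolding H_def by (intro rat_cong_sum[OF pp] inv_pow_cong[OF pp]) (use pn p3 in auto)
    moreover have "rat_cong (\<Sum>i\<in>{1..n}. of_int (int i ^ (p-3))) 0 p 1"
    proof -
      have "int p dvd (\<Sum>i\<in>{1..n}. int i ^ (p-3))" using powsum_half[OF pp p3] unfolding n_def .
      then have "[(\<Sum>i\<in>{1..n}. int i ^ (p-3)) = 0] (mod int (p^1))" by (simp add: cong_0_iff)
      then have "rat_cong (of_int (\<Sum>i\<in>{1..n}. int i ^ (p-3))) (of_int 0) p 1" by (rule rat_cong_int[OF pp])
      then show ?thesis by simp
    qed
    ultimately show ?thesis by (rule rat_cong_trans[OF pp])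
  qed
  have pintA: "pint p A" unfolding A_def
    by (intro pint_sum[OF pp] pint_mult[OF pp] pint_inv_sq[OF pp])
       (use pn pint_int[OF pp, of "(-1)^_"] in auto)
  have pint14: "pint p ((1/4) * (-1)^n)"
  proof -
    have "\<not> int p dvd 4"
    proof -
      have "p \<noteq> 4" using pn by presburger
      then show ?thesis using small_ndvd[of 4 p] p3 by simp
    qed
    then have "pint p (of_int ((-1)^n) / of_int 4)" by (rule pint_frac)
    then show ?thesis by simp
  qed
  have c4: "rat_cong (\<Sum>j<n. bj j) ((1/4) * (-1)^n * (2 * A)) p 1"
  proof -
    have "rat_cong (2 * A + H) (2 * A + 0) p 1" by (rule rat_cong_add[OF pp rat_cong_refl[OF pp] c3])
    then have "rat_cong ((1/4) * (-1)^n * (2 * A + H)) ((1/4) * (-1)^n * (2 * A + 0)) p 1"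
      by (rule rat_cong_cmult[OF pp pint14])
    then show ?thesis unfolding e2 by simp
  qed
  have L: "rat_cong (\<Sum>k\<in>{1..n}. xf k) (- ((1/2) * ((-1)^n * A))) p 1"
  proof -
    have "rat_cong (- (\<Sum>j<n. aj j)) (- ((1/4) * (-1)^n * (2 * A))) p 1"
      by (rule rat_cong_neg[OF rat_cong_trans[OF pp c2 c4]])
    then have X: "rat_cong (\<Sum>k\<in>{1..n}. xf k) (- ((1/4) * (-1)^n * (2 * A))) p 1"
      using rat_cong_trans[OF pp c1] unfolding e1 by blast
    have eqq: "(1/4) * (-1)^n * (2 * A) = (1/2) * ((-1)^n * A :: rat)" by simp
    show ?thesis using X unfolding eqq .
  qed
  have c5: "rat_cong (of_int (euler_num (p-3))) (of_int (2^(p-2) * (-1)^n * (\<Sum>i\<in>{1..n}. (-1)^i * int i ^ (p-3)))) p 1"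
  proof (rule rat_cong_int[OF pp])
    show "[euler_num (p-3) = 2^(p-2) * (-1)^n * (\<Sum>i\<in>{1..n}. (-1)^i * int i ^ (p-3))] (mod int (p^1))"
      using E_cong_int[OF pp p3] unfolding n_def by simp
  qed
  have e5: "(of_int (2^(p-2) * (-1)^n * (\<Sum>i\<in>{1..n}. (-1)^i * int i ^ (p-3))) :: rat)
      = of_int (2^(p-2)) * ((-1)^n * (\<Sum>i\<in>{1..n}. (-1)^i * of_int (int i ^ (p-3))))"
    by (simp add: of_int_sum)
  have c6: "rat_cong ((-1)^n * (\<Sum>i\<in>{1..n}. (-1)^i * of_int (int i ^ (p-3)))) ((-1)^n * A) p 1"
  proof (rule rat_cong_cmult[OF pp])
    show "pint p ((-1)^n)" using pint_int[OF pp, of "(-1)^n"] by simp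
    show "rat_cong (\<Sum>i\<in>{1..n}. (-1)^i * of_int (int i ^ (p-3))) A p 1" unfolding A_def
    proof (intro rat_cong_sum[OF pp] rat_cong_cmult[OF pp])
      fix i assume i: "i \<in> {1..n}"
      show "pint p ((-1)^i)" using pint_int[OF pp, of "(-1)^i"] by simp
      show "rat_cong (of_int (int i ^ (p-3))) (1 / of_nat i ^ 2) p 1"
        by (rule rat_cong_sym[OF inv_pow_cong[OF pp]]) (use i pn p3 in auto)
    qed
  qed
  have c7: "rat_cong (of_int (2^(p-2)) * ((-1)^n * (\<Sum>i\<in>{1..n}. (-1)^i * of_int (int i ^ (p-3))))) ((1/2) * ((-1)^n * A)) p 1"
  proof (rule rat_cong_mult[OF pp half_cong[OF pp p2] c6])
    show "pint p (of_int (2^(p-2)))" by (rule pint_int[OF pp])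
    show "pint p ((-1)^n * A)" using pint_int[OF pp, of "(-1)^n"] pintA by (simp add: pint_mult[OF pp])
  qed
  have c8: "rat_cong (of_int (euler_num (p-3))) ((1/2) * ((-1)^n * A)) p 1"
    using rat_cong_trans[OF pp c5] c7 unfolding e5 by blast
  have c9: "rat_cong (\<Sum>k\<in>{1..n}. xf k) (- of_int (euler_num (p-3))) p 1"
    using rat_cong_trans[OF pp L rat_cong_sym[OF rat_cong_neg[OF c8]]] .
  have "rat_cong (of_nat (p^3) * (\<Sum>k\<in>{1..n}. xf k)) (of_nat (p^3) * (- of_int (euler_num (p-3)))) p 4"
    by (rule rat_cong_scale3[OF c9])
  then show ?thesis unfolding n_def[symmetric] sG by simp
qed

end
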